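(* Let $\tau>0$ and $f\in C(\mathbb R_+\times\mathbb R,\mathbb R)$ be regular and asymptotically $\tau$-periodic in time, $f=P+R$. Assume every $\tau$-periodic solution of $x'=P(t,x)$ is positively asymptotically stable or negatively asymptotically stable, and that the solution $\varphi(t,u_0,f)$ of $x'=f(t,x)$, $x(0)=u_0$, is bounded on $\mathbb R_+$. Then $\varphi(t,u_0,f)$ is asymptotically $\tau$-periodic.
   Context: Regular: for every $g\in H(f)=\overline{\{f(\cdot+h,\cdot):h\ge0\}}$ (compact-open topology) and $v\in\mathbb R$, $y'=g(t,y)$ has a unique solution $\varphi(t,v,g)$, $\varphi(0,v,g)=v$, defined on $\mathbb R_+$. Asymptotically $\tau$-periodic in time: $f=P+R$, $P,R$ continuous, $P(t+\tau,x)=P(t,x)$, $R(t,x)\to0$ as $t\to+\infty$ uniformly on compact $x$-sets (extend $P$ $\tau$-periodically to $t\in\mathbb R$). A $\tau$-periodic solution $\varphi(t,u_0,P)$ of $x'=P(t,x)$ is positively asymptotically stable if (a) for all $\varepsilon>0$ there is $\delta>0$ with $|u-u_0|<\delta\Rightarrow|\varphi(t,u,P)-\varphi(t,u_0,P)|<\varepsilon$ for all $t\ge0$, and (b) there is $\gamma>0$ with $|\varphi(t,u,P)-\varphi(t,u_0,P)|\to0$ as $t\to+\infty$ whenever $|u-u_0|<\gamma$; negatively asymptotically stable means the same with $t\le0$ and $t\to-\infty$ (for the equation considered in backward time). Asymptotically $\tau$-periodic solution: differs from a continuous $\tau$-periodic function by a function tending to $0$ as $t\to+\infty$. *)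

theory Defs
  imports "HOL-Analysis.Analysis"
begin

text \<open>Functions on R_+ x R are represented as curried maps real => real => real;
  only their values for t >= 0 matter.\<close>

definition fwd_sol :: "(real \<Rightarrow> real \<Rightarrow> real) \<Rightarrow> real \<Rightarrow> (real \<Rightarrow> real) \<Rightarrow> bool" where
  "fwd_sol g v y \<longleftrightarrow> y 0 = v \<and>
     (\<forall>t\<ge>0. (y has_real_derivative g t (y t)) (at t within {0..}))"

definition bwd_sol :: "(real \<Rightarrow> real \<Rightarrow> real) \<Rightarrow> real \<Rightarrow> (real \<Rightarrow> real) \<Rightarrow> bool" where
  "bwd_sol g v y \<longleftrightarrow> y 0 = v \<and>
     (\<forall>t\<le>0. (y has_real_derivative g t (y t)) (at t within {..0}))"

text \<open>phi(t,v,g): the (unique, under regularity) solution on R_+.\<close>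
definition phi :: "(real \<Rightarrow> real \<Rightarrow> real) \<Rightarrow> real \<Rightarrow> real \<Rightarrow> real" where
  "phi g v = (SOME y. fwd_sol g v y)"

text \<open>Hull H(f): closure of the translates f(.+h,.), h >= 0, in the compact-open
  topology of C(R_+ x R, R), i.e. the topology of uniform convergence on compacta.\<close>
definition hull_fun :: "(real \<Rightarrow> real \<Rightarrow> real) \<Rightarrow> (real \<Rightarrow> real \<Rightarrow> real) set" where
  "hull_fun f = {g. continuous_on ({0..} \<times> UNIV) (\<lambda>(t,x). g t x) \<and>
     (\<forall>K. K \<subseteq> {0..} \<times> UNIV \<longrightarrow> compact K \<longrightarrow>
        (\<forall>e>0. \<exists>h\<ge>0. \<forall>(t,x)\<in>K. \<bar>f (t + h) x - g t x\<bar> < e))}"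

definition regular :: "(real \<Rightarrow> real \<Rightarrow> real) \<Rightarrow> bool" where
  "regular f \<longleftrightarrow> (\<forall>g\<in>hull_fun f. \<forall>v. \<exists>y. fwd_sol g v y \<and>
      (\<forall>z. fwd_sol g v z \<longrightarrow> (\<forall>t\<ge>0. z t = y t)))"

text \<open>f = P + R asymptotically tau-periodic decomposition (P extended tau-periodically to R).\<close>
definition asymp_periodic_decomp ::
  "real \<Rightarrow> (real \<Rightarrow> real \<Rightarrow> real) \<Rightarrow> (real \<Rightarrow> real \<Rightarrow> real) \<Rightarrow> (real \<Rightarrow> real \<Rightarrow> real) \<Rightarrow> bool" where
  "asymp_periodic_decomp \<tau> f P R \<longleftrightarrow>
     continuous_on UNIV (\<lambda>(t,x). P t x) \<and>
     continuous_on ({0..} \<times> UNIV) (\<lambda>(t,x). R t x) \<and>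
     (\<forall>t x. P (t + \<tau>) x = P t x) \<and>
     (\<forall>t\<ge>0. \<forall>x. f t x = P t x + R t x) \<and>
     (\<forall>K. compact K \<longrightarrow> (\<forall>e>0. \<exists>T. \<forall>t\<ge>T. \<forall>x\<in>K. \<bar>R t x\<bar> < e))"

text \<open>A tau-periodic solution of x' = P(t,x) (taken on all of R, i.e. the periodic
  extension of phi(.,p 0,P)).\<close>
definition periodic_sol :: "real \<Rightarrow> (real \<Rightarrow> real \<Rightarrow> real) \<Rightarrow> (real \<Rightarrow> real) \<Rightarrow> bool" where
  "periodic_sol \<tau> P p \<longleftrightarrow> (\<forall>t. p (t + \<tau>) = p t) \<and>
     (\<forall>t. (p has_real_derivative P t (p t)) (at t))"

definition pos_asymp_stable :: "(real \<Rightarrow> real \<Rightarrow> real) \<Rightarrow> (real \<Rightarrow> real) \<Rightarrow> bool" where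
  "pos_asymp_stable P p \<longleftrightarrow>
     (\<forall>e>0. \<exists>d>0. \<forall>u. \<bar>u - p 0\<bar> < d \<longrightarrow> (\<forall>t\<ge>0. \<bar>phi P u t - p t\<bar> < e)) \<and>
     (\<exists>c>0. \<forall>u. \<bar>u - p 0\<bar> < c \<longrightarrow> ((\<lambda>t. \<bar>phi P u t - p t\<bar>) \<longlongrightarrow> 0) at_top)"

text \<open>Backward analogue; phi(t,u,P) for t <= 0 is read as: backward solutions exist
  and every backward solution has the property.\<close>
definition neg_asymp_stable :: "(real \<Rightarrow> real \<Rightarrow> real) \<Rightarrow> (real \<Rightarrow> real) \<Rightarrow> bool" where
  "neg_asymp_stable P p \<longleftrightarrow>
     (\<forall>e>0. \<exists>d>0. \<forall>u. \<bar>u - p 0\<bar> < d \<longrightarrow>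
        (\<exists>y. bwd_sol P u y) \<and> (\<forall>y. bwd_sol P u y \<longrightarrow> (\<forall>t\<le>0. \<bar>y t - p t\<bar> < e))) \<and>
     (\<exists>c>0. \<forall>u. \<bar>u - p 0\<bar> < c \<longrightarrow>
        (\<exists>y. bwd_sol P u y) \<and> (\<forall>y. bwd_sol P u y \<longrightarrow> ((\<lambda>t. \<bar>y t - p t\<bar>) \<longlongrightarrow> 0) at_bot))"

definition asymp_periodic_fun :: "real \<Rightarrow> (real \<Rightarrow> real) \<Rightarrow> bool" where
  "asymp_periodic_fun \<tau> y \<longleftrightarrow> (\<exists>q. continuous_on UNIV q \<and> (\<forall>t. q (t + \<tau>) = q t) \<and>
     ((\<lambda>t. y t - q t) \<longlongrightarrow> 0) at_top)"

end

theory Submission imports Defs "HOL-Complex_Analysis.Great_Picard" begin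

lemma fwd_sol_shift:
  assumes "fwd_sol g v x" "a \<ge> 0"
  shows "fwd_sol (\<lambda>t. g (t + a)) (x a) (\<lambda>s. x (s + a))"
  unfolding fwd_sol_def
proof (intro conjI allI impI)
  fix t :: real assume t: "t \<ge> 0"
  have d: "(x has_real_derivative g (t + a) (x (t + a))) (at (t + a) within {0..})"
    using assms t unfolding fwd_sol_def by auto
  have im: "(\<lambda>s. s + a) ` {0..} \<subseteq> {0..}" using assms(2) by auto
  have d2: "(x has_real_derivative g (t + a) (x (t + a))) (at ((\<lambda>s. s + a) t) within ((\<lambda>s. s + a) ` {0..}))"
    using has_field_derivative_subset[OF d im] by simp
  have "((\<lambda>s. s + a) has_real_derivative 1) (at t within {0..})"
    by (auto intro!: derivative_eq_intros)
  from DERIV_image_chain[OF d2 this]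
  show "((\<lambda>s. x (s + a)) has_real_derivative g (t + a) (x (t + a))) (at t within {0..})"
    by (simp add: o_def)
qed simp

lemma deriv_trivial:
  assumes "\<not> t islimpt A"
  shows "(h has_real_derivative D) (at t within A)"
proof -
  have "at t within A = bot" using assms trivial_limit_within by blast
  then show ?thesis by (simp add: has_field_derivative_iff)
qed

lemma deriv_Un:
  assumes "(h has_real_derivative D) (at t within A)" "(h has_real_derivative D) (at t within B)"
  shows "(h has_real_derivative D) (at t within (A \<union> B))"
  using assms by (simp add: has_field_derivative_iff Lim_within_Un)

lemma frac_bounds:
  fixes t \<tau> :: real assumes "\<tau> > 0"
  shows "0 \<le> t - \<tau> * of_int \<lfloor>t/\<tau>\<rfloor>" "t - \<tau> * of_int \<lfloor>t/\<tau>\<rfloor> < \<tau>"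
proof -
  have a: "of_int \<lfloor>t/\<tau>\<rfloor> \<le> t/\<tau>" by (rule of_int_floor_le)
  have b: "t/\<tau> < of_int \<lfloor>t/\<tau>\<rfloor> + 1" by (rule real_of_int_floor_add_one_gt)
  from mult_right_mono[OF a, of \<tau>] assms have "of_int \<lfloor>t/\<tau>\<rfloor> * \<tau> \<le> t" by simp
  then show "0 \<le> t - \<tau> * of_int \<lfloor>t/\<tau>\<rfloor>" by (simp add: algebra_simps)
  from mult_strict_right_mono[OF b, of \<tau>] assms have "t < (of_int \<lfloor>t/\<tau>\<rfloor> + 1) * \<tau>" by simp
  then show "t - \<tau> * of_int \<lfloor>t/\<tau>\<rfloor> < \<tau>" by (simp add: algebra_simps)
qed

locale setting =
  fixes \<tau> :: real and f P R :: "real \<Rightarrow> real \<Rightarrow> real" and u0 :: real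
  assumes tau: "\<tau> > 0"
    and fcont: "continuous_on ({0..} \<times> UNIV) (\<lambda>(t,x). f t x)"
    and reg: "regular f"
    and dec: "asymp_periodic_decomp \<tau> f P R"
    and stab: "\<And>p. periodic_sol \<tau> P p \<Longrightarrow> pos_asymp_stable P p \<or> neg_asymp_stable P p"
    and bnd: "bounded (phi f u0 ` {0..})"
begin

lemmas decs = dec[unfolded asymp_periodic_decomp_def]
lemma Pcont: "continuous_on UNIV (\<lambda>(t,x). P t x)" using decs by (rule conjunct1)
lemma Rcont: "continuous_on ({0..} \<times> UNIV) (\<lambda>(t,x). R t x)" using conjunct2[OF decs] by (rule conjunct1)
lemma Pper_all: "\<forall>t x. P (t + \<tau>) x = P t x" using conjunct2[OF conjunct2[OF decs]] by (rule conjunct1)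
lemma feq_all: "\<forall>t\<ge>0. \<forall>x. f t x = P t x + R t x" using conjunct2[OF conjunct2[OF conjunct2[OF decs]]] by (rule conjunct1)
lemma Rlim_all: "\<forall>K. compact K \<longrightarrow> (\<forall>e>0. \<exists>T. \<forall>t\<ge>T. \<forall>x\<in>K. \<bar>R t x\<bar> < e)"
  using conjunct2[OF conjunct2[OF conjunct2[OF decs]]] by (rule conjunct2)
lemma Pper: "P (t + \<tau>) = P t" using Pper_all by (simp add: fun_eq_iff)
lemma f_eq: "t \<ge> 0 \<Longrightarrow> f t x = P t x + R t x" using feq_all by simp
lemma Rlim: "compact K \<Longrightarrow> e > 0 \<Longrightarrow> \<exists>T. \<forall>t\<ge>T. \<forall>x\<in>K. \<bar>R t x\<bar> < e"
  using Rlim_all by simp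

lemma Pper_nat: "P (t + real n * \<tau>) = P t"
proof (induction n)
  case (Suc n)
  have "P (t + real (Suc n) * \<tau>) = P ((t + real n * \<tau>) + \<tau>)" by (simp add: algebra_simps)
  also have "\<dots> = P t" using Pper[of "t + real n * \<tau>"] Suc by simp
  finally show ?case .
qed simp

lemma Pper_int: "P (t + real_of_int k * \<tau>) = P t"
proof (cases "k \<ge> 0")
  case True
  have "P (t + real (nat k) * \<tau>) = P t" by (rule Pper_nat)
  then show ?thesis using True by simp
next
  case False
  then have e: "real (nat (-k)) = - real_of_int k" by simp
  have "(t + real_of_int k * \<tau>) + real (nat (-k)) * \<tau> = t" by (simp add: e algebra_simps)
  then have "P t = P ((t + real_of_int k * \<tau>) + real (nat (-k)) * \<tau>)" by (rule arg_cong[symmetric])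
  also have "\<dots> = P (t + real_of_int k * \<tau>)" by (rule Pper_nat)
  finally show ?thesis by simp
qed

lemma P_red: "P t = P (t - \<tau> * of_int \<lfloor>t/\<tau>\<rfloor>)"
  using Pper_int[of "t - \<tau> * of_int \<lfloor>t/\<tau>\<rfloor>" "\<lfloor>t/\<tau>\<rfloor>"] by (simp add: algebra_simps)

lemma hull_P: assumes "a \<ge> 0" shows "(\<lambda>t. P (t + a)) \<in> hull_fun f"
  unfolding hull_fun_def
proof (intro CollectI conjI allI impI)
  have "continuous_on ({0..} \<times> UNIV) (\<lambda>z. (\<lambda>(t,x). P t x) ((\<lambda>z. (fst z + a, snd z)) z))"
    by (rule continuous_on_compose2[OF Pcont]) (auto intro!: continuous_intros)
  then show "continuous_on ({0..} \<times> UNIV) (\<lambda>(t,x). P (t + a) x)"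
    by (simp add: split_beta)
next
  fix K :: "(real \<times> real) set" and e :: real
  assume K: "K \<subseteq> {0..} \<times> UNIV" "compact K" and e: "e > 0"
  have "compact (snd ` K)" by (rule compact_continuous_image[OF continuous_on_snd K(2)]) (rule continuous_on_id)
  then obtain T where T: "\<forall>t\<ge>T. \<forall>x\<in>snd ` K. \<bar>R t x\<bar> < e" using Rlim e by blast
  obtain n :: nat where n: "T/\<tau> \<le> real n" using real_arch_simple by blast
  then have nT: "T \<le> real n * \<tau>" using tau by (simp add: pos_divide_le_eq)
  show "\<exists>h\<ge>0. \<forall>(t,x)\<in>K. \<bar>f (t + h) x - P (t + a) x\<bar> < e"
  proof (intro exI[of _ "a + real n * \<tau>"] conjI ballI)
    show "0 \<le> a + real n * \<tau>" using assms tau by simp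
    fix z assume z: "z \<in> K"
    obtain t x where tx: "z = (t, x)" by force
    have t0: "t \<ge> 0" using K z tx by auto
    have "f (t + (a + real n * \<tau>)) x = P ((t + a) + real n * \<tau>) x + R (t + (a + real n * \<tau>)) x"
      using f_eq[of "t + (a + real n * \<tau>)" x] t0 assms tau by (simp add: algebra_simps)
    also have "P ((t + a) + real n * \<tau>) = P (t + a)" by (rule Pper_nat)
    finally have eq: "f (t + (a + real n * \<tau>)) x - P (t + a) x = R (t + (a + real n * \<tau>)) x" by simp
    have xK: "x \<in> snd ` K" using z tx by force
    have "t + (a + real n * \<tau>) \<ge> T" using t0 assms nT by linarith
    then have "\<bar>R (t + (a + real n * \<tau>)) x\<bar> < e"
      using T xK by blast
    then show "case z of (t, x) \<Rightarrow> \<bar>f (t + (a + real n * \<tau>)) x - P (t + a) x\<bar> < e"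
      using eq tx by simp
  qed
qed

lemma P_hull: "P \<in> hull_fun f" using hull_P[of 0] by simp

lemma f_hull: "f \<in> hull_fun f"
  unfolding hull_fun_def using fcont by (auto intro!: exI[of _ 0])

lemma sol: "g \<in> hull_fun f \<Longrightarrow> fwd_sol g v (phi g v)"
  using reg unfolding regular_def phi_def by (metis someI)

lemma uniq: "g \<in> hull_fun f \<Longrightarrow> fwd_sol g v z \<Longrightarrow> t \<ge> 0 \<Longrightarrow> z t = phi g v t"
proof -
  assume g: "g \<in> hull_fun f" and z: "fwd_sol g v z" and t: "t \<ge> 0"
  obtain y where y: "fwd_sol g v y" "\<forall>z. fwd_sol g v z \<longrightarrow> (\<forall>t\<ge>0. z t = y t)"
    using reg g unfolding regular_def by blast
  show ?thesis using y z sol[OF g] t by metis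
qed

lemma Ssol: "fwd_sol P u (phi P u)" using sol[OF P_hull] .
lemma Suniq: "fwd_sol P u z \<Longrightarrow> t \<ge> 0 \<Longrightarrow> z t = phi P u t" using uniq[OF P_hull] .
lemma S0: "phi P u 0 = u" using Ssol unfolding fwd_sol_def by blast
lemma Sderiv: "t \<ge> 0 \<Longrightarrow> (phi P u has_real_derivative P t (phi P u t)) (at t within {0..})"
  using Ssol unfolding fwd_sol_def by blast
lemma Scont: "continuous_on {0..} (phi P u)"
  using Sderiv by (auto simp: continuous_on_eq_continuous_within intro: DERIV_continuous)

lemma S_meet:
  assumes "phi P u t1 = phi P v t1" "t1 \<ge> 0" "s \<ge> t1"
  shows "phi P u s = phi P v s"
proof -
  let ?Q = "\<lambda>t. P (t + t1)"
  have Q: "?Q \<in> hull_fun f" using hull_P assms by blast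
  have 1: "fwd_sol ?Q (phi P u t1) (\<lambda>s. phi P u (s + t1))" by (rule fwd_sol_shift[OF Ssol assms(2)])
  have 2: "fwd_sol ?Q (phi P u t1) (\<lambda>s. phi P v (s + t1))" using fwd_sol_shift[OF Ssol assms(2), of v] assms by simp
  have "phi P u ((s - t1) + t1) = phi P v ((s - t1) + t1)"
    using uniq[OF Q 1, of "s - t1"] uniq[OF Q 2, of "s - t1"] assms by simp
  then show ?thesis by simp
qed

lemma S_mono:
  assumes uv: "u \<le> v" and t: "t \<ge> 0"
  shows "phi P u t \<le> phi P v t"
proof (rule ccontr)
  assume "\<not> ?thesis"
  then have gt: "phi P u t > phi P v t" by simp
  define h where "h s = phi P u s - phi P v s" for s
  have hc: "continuous_on {0..t} h" unfolding h_def
    by (intro continuous_intros; rule continuous_on_subset[OF Scont]) auto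
  define A where "A = {0..t} \<inter> h -` {..0}"
  have cA: "closed A" unfolding A_def by (rule continuous_closed_preimage[OF hc]) auto
  have 0: "0 \<in> A" using uv t by (simp add: A_def h_def S0)
  have bA: "bdd_above A" unfolding A_def by (auto intro!: bdd_aboveI[of _ t])
  define t1 where "t1 = Sup A"
  have t1A: "t1 \<in> A" unfolding t1_def using closed_contains_Sup[OF _ bA cA] 0 by blast
  then have t1: "0 \<le> t1" "t1 \<le> t" "h t1 \<le> 0" by (auto simp: A_def)
  have "h t1 = 0"
  proof (rule ccontr)
    assume "h t1 \<noteq> 0"
    then have "h t1 < 0" using t1 by simp
    moreover have "0 < h t" using gt by (simp add: h_def)
    moreover have "continuous_on {t1..t} h" by (rule continuous_on_subset[OF hc]) (use t1 in auto)
    ultimately obtain s where s: "t1 \<le> s" "s \<le> t" "h s = 0" using IVT'[of h t1 0 t] t1 by auto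
    then have "s \<in> A" using t1 by (auto simp: A_def)
    then have "s \<le> t1" unfolding t1_def by (rule cSup_upper[OF _ bA])
    then show False using s \<open>h t1 < 0\<close> by simp
  qed
  then have "phi P u t = phi P v t" using S_meet[of u t1 v t] t1 by (simp add: h_def)
  then show False using gt by simp
qed

abbreviation Tm where "Tm u \<equiv> phi P u \<tau>"

lemma T_mono: "u \<le> v \<Longrightarrow> Tm u \<le> Tm v" using S_mono tau by simp

lemma S_semi: assumes "t \<ge> 0" shows "phi P u (t + \<tau>) = phi P (Tm u) t"
proof -
  have "fwd_sol (\<lambda>t. P (t + \<tau>)) (Tm u) (\<lambda>s. phi P u (s + \<tau>))"
    by (rule fwd_sol_shift[OF Ssol]) (use tau in simp)
  then have "fwd_sol P (Tm u) (\<lambda>s. phi P u (s + \<tau>))" by (simp add: Pper)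
  from Suniq[OF this assms] show ?thesis by simp
qed

lemma S_fix_per: assumes "Tm c = c" "t \<ge> 0" shows "phi P c (t + real n * \<tau>) = phi P c t"
proof (induction n)
  case (Suc n)
  have "phi P c (t + real (Suc n) * \<tau>) = phi P c ((t + real n * \<tau>) + \<tau>)" by (simp add: algebra_simps)
  also have "\<dots> = phi P c (t + real n * \<tau>)" using S_semi[of "t + real n * \<tau>" c] assms tau by simp
  finally show ?case using Suc by simp
qed simp

definition pp where "pp c t = phi P c (t - \<tau> * of_int \<lfloor>t/\<tau>\<rfloor>)"

lemma pp_per: "pp c (t + \<tau>) = pp c t"
proof -
  have "(t + \<tau>)/\<tau> = t/\<tau> + 1" using tau by (simp add: field_simps)
  then have "\<lfloor>(t + \<tau>)/\<tau>\<rfloor> = \<lfloor>t/\<tau>\<rfloor> + 1" by simp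
  then show ?thesis by (simp add: pp_def algebra_simps)
qed

lemma pp_per_nat: "pp c (t + real n * \<tau>) = pp c t"
proof (induction n)
  case (Suc n)
  have "pp c (t + real (Suc n) * \<tau>) = pp c ((t + real n * \<tau>) + \<tau>)" by (simp add: algebra_simps)
  also have "\<dots> = pp c (t + real n * \<tau>)" by (rule pp_per)
  finally show ?case using Suc by simp
qed simp

lemma pp_nonneg: assumes fx: "Tm c = c" and t: "t \<ge> 0" shows "pp c t = phi P c t"
proof -
  have k0: "\<lfloor>t/\<tau>\<rfloor> \<ge> 0" using tau t by simp
  have r0: "0 \<le> t - \<tau> * of_int \<lfloor>t/\<tau>\<rfloor>" using frac_bounds[OF tau] by blast
  have e: "real (nat \<lfloor>t/\<tau>\<rfloor>) = of_int \<lfloor>t/\<tau>\<rfloor>" using k0 by simp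
  have "t = (t - \<tau> * of_int \<lfloor>t/\<tau>\<rfloor>) + real (nat \<lfloor>t/\<tau>\<rfloor>) * \<tau>" by (simp add: e)
  then have "phi P c t = phi P c ((t - \<tau> * of_int \<lfloor>t/\<tau>\<rfloor>) + real (nat \<lfloor>t/\<tau>\<rfloor>) * \<tau>)" by (rule arg_cong)
  also have "\<dots> = phi P c (t - \<tau> * of_int \<lfloor>t/\<tau>\<rfloor>)" by (rule S_fix_per[OF fx r0])
  finally show ?thesis by (simp add: pp_def)
qed

lemma pp_int: "pp c (of_int k * \<tau>) = c"
proof -
  have "of_int k * \<tau> / \<tau> = of_int k" using tau by simp
  then show ?thesis by (simp add: pp_def S0)
qed

lemma pp_zero: "pp c 0 = c" using pp_int[of c 0] by simp
lemma pp_nat: "pp c (\<tau> * real n) = c" using pp_int[of c "int n"] by (simp add: mult.commute)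
lemma pp_negnat: "pp c (-(\<tau> * real n)) = c" using pp_int[of c "- int n"] by (simp add: mult.commute)

lemma pp_deriv: assumes fx: "Tm c = c" shows "(pp c has_real_derivative P t (pp c t)) (at t)"
proof -
  obtain N :: nat where N: "-t/\<tau> < real N" using reals_Archimedean2 by blast
  have "(-t/\<tau>) * \<tau> < real N * \<tau>" by (rule mult_strict_right_mono[OF N tau])
  then have tN: "t + real N * \<tau> > 0" using tau by simp
  define t' where "t' = t + real N * \<tau>"
  have d1: "(phi P c has_real_derivative P t' (phi P c t')) (at t' within {0<..})"
    by (rule has_field_derivative_subset[OF Sderiv]) (use tN t'_def in auto)
  have d2: "(phi P c has_real_derivative P t' (phi P c t')) (at t')"
    using d1 at_within_open[of t' "{0<..}"] tN t'_def by simp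
  have d3: "((\<lambda>s. phi P c (s + real N * \<tau>)) has_real_derivative P t' (phi P c t')) (at t)"
    using d2 DERIV_shift[of "phi P c" "P t' (phi P c t')" t "real N * \<tau>"] t'_def by simp
  have eqv: "phi P c (s + real N * \<tau>) = pp c s" if "s \<in> {-(real N * \<tau>)<..}" for s
  proof -
    have "pp c s = pp c (s + real N * \<tau>)" by (rule pp_per_nat[symmetric])
    also have "\<dots> = phi P c (s + real N * \<tau>)" by (rule pp_nonneg[OF fx]) (use that in simp)
    finally show ?thesis by simp
  qed
  have tin: "t \<in> {-(real N * \<tau>)<..}" using tN by simp
  have d4: "(pp c has_real_derivative P t' (phi P c t')) (at t)"
    by (rule has_field_derivative_transform_within_open[OF d3 _ tin eqv]) auto
  have "P t' = P t" unfolding t'_def by (rule Pper_nat)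
  moreover have "phi P c t' = pp c t" using eqv[OF tin] t'_def by simp
  ultimately show ?thesis using d4 by simp
qed

lemma pp_psol: "Tm c = c \<Longrightarrow> periodic_sol \<tau> P (pp c)"
  unfolding periodic_sol_def using pp_per pp_deriv by blast

lemma fixed_isolated:
  assumes fx: "Tm c = c" and near: "\<And>e. e > 0 \<Longrightarrow> \<exists>c'. c' \<noteq> c \<and> \<bar>c' - c\<bar> < e \<and> Tm c' = c'"
  shows False
proof -
  have seq: "filterlim (\<lambda>n::nat. \<tau> * real n) at_top sequentially"
    by (rule filterlim_tendsto_pos_mult_at_top[OF tendsto_const tau filterlim_real_sequentially])
  from stab[OF pp_psol[OF fx]] show False
  proof
    assume "pos_asymp_stable P (pp c)"
    then obtain g where g: "g > 0" "\<forall>u. \<bar>u - pp c 0\<bar> < g \<longrightarrow> ((\<lambda>t. \<bar>phi P u t - pp c t\<bar>) \<longlongrightarrow> 0) at_top"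
      unfolding pos_asymp_stable_def by blast
    obtain c' where c': "c' \<noteq> c" "\<bar>c' - c\<bar> < g" "Tm c' = c'" using near g by blast
    have lim: "((\<lambda>t. \<bar>phi P c' t - pp c t\<bar>) \<longlongrightarrow> 0) at_top" using g c' by (simp add: pp_zero)
    have "((\<lambda>n. \<bar>phi P c' (\<tau> * real n) - pp c (\<tau> * real n)\<bar>) \<longlongrightarrow> 0) sequentially"
      by (rule filterlim_compose[OF lim seq])
    moreover have "phi P c' (\<tau> * real n) = c'" for n
      using pp_nonneg[OF c'(3), of "\<tau> * real n"] pp_nat[of c' n] tau by simp
    ultimately have "((\<lambda>n. \<bar>c' - c\<bar>) \<longlongrightarrow> 0) sequentially" by (simp add: pp_nat)
    then have "\<bar>c' - c\<bar> = 0" by (simp add: LIMSEQ_const_iff)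
    then show False using c' by simp
  next
    assume "neg_asymp_stable P (pp c)"
    then obtain g where g: "g > 0" "\<forall>u. \<bar>u - pp c 0\<bar> < g \<longrightarrow> (\<exists>y. bwd_sol P u y) \<and>
        (\<forall>y. bwd_sol P u y \<longrightarrow> ((\<lambda>t. \<bar>y t - pp c t\<bar>) \<longlongrightarrow> 0) at_bot)"
      unfolding neg_asymp_stable_def by blast
    obtain c' where c': "c' \<noteq> c" "\<bar>c' - c\<bar> < g" "Tm c' = c'" using near g by blast
    have bw: "bwd_sol P c' (pp c')"
      unfolding bwd_sol_def using pp_zero pp_deriv[OF c'(3)] has_field_derivative_at_within by blast
    have lim: "((\<lambda>t. \<bar>pp c' t - pp c t\<bar>) \<longlongrightarrow> 0) at_bot" using g c' bw by (simp add: pp_zero)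
    have seq2: "filterlim (\<lambda>n::nat. - (\<tau> * real n)) at_bot sequentially"
      by (rule filterlim_uminus_at_top[THEN iffD1, OF seq])
    have "((\<lambda>n. \<bar>pp c' (- (\<tau> * real n)) - pp c (- (\<tau> * real n))\<bar>) \<longlongrightarrow> 0) sequentially"
      by (rule filterlim_compose[OF lim seq2])
    then have "((\<lambda>n. \<bar>c' - c\<bar>) \<longlongrightarrow> 0) sequentially" by (simp add: pp_negnat)
    then have "\<bar>c' - c\<bar> = 0" by (simp add: LIMSEQ_const_iff)
    then show False using c' by simp
  qed
qed

abbreviation ys where "ys \<equiv> phi f u0"

lemma ysol: "fwd_sol f u0 ys" by (rule sol[OF f_hull])
lemma yderiv: "t \<ge> 0 \<Longrightarrow> (ys has_real_derivative f t (ys t)) (at t within {0..})"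
  using ysol unfolding fwd_sol_def by blast

definition Bd where "Bd = (SOME B. B > 0 \<and> (\<forall>t\<ge>0. \<bar>ys t\<bar> \<le> B))"

lemma Bd_ex: "\<exists>B. B > 0 \<and> (\<forall>t\<ge>0. \<bar>ys t\<bar> \<le> B)"
proof -
  obtain b where b: "b > 0" "\<forall>x\<in>ys ` {0..}. norm x \<le> b" using bnd bounded_pos by blast
  then show ?thesis by (intro exI[of _ b]) auto
qed

lemma Bd: "Bd > 0" "t \<ge> 0 \<Longrightarrow> \<bar>ys t\<bar> \<le> Bd"
  using someI_ex[OF Bd_ex] unfolding Bd_def[symmetric] by auto

lemma fbound_ex: "\<exists>C. \<forall>t\<ge>0. \<forall>x. \<bar>x\<bar> \<le> Bd \<longrightarrow> \<bar>f t x\<bar> \<le> C"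
proof -
  define K1 where "K1 = {0..\<tau>} \<times> {-Bd..Bd}"
  have cK1: "compact K1" unfolding K1_def by (intro compact_Times compact_Icc)
  have "compact ((\<lambda>(t,x). P t x) ` K1)"
    by (rule compact_continuous_image[OF continuous_on_subset[OF Pcont] cK1]) auto
  then obtain C1 where C1: "\<forall>z\<in>(\<lambda>(t,x). P t x) ` K1. norm z \<le> C1"
    using compact_imp_bounded bounded_iff by metis
  have Pb: "\<bar>P t x\<bar> \<le> C1" if "\<bar>x\<bar> \<le> Bd" for t x
  proof -
    define r where "r = t - \<tau> * of_int \<lfloor>t/\<tau>\<rfloor>"
    have r: "0 \<le> r" "r < \<tau>" using frac_bounds[OF tau, of t] r_def by auto
    have "P t x = P r x" using P_red r_def by simp
    moreover have "(r, x) \<in> K1" using r that by (auto simp: K1_def)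
    ultimately show ?thesis using C1 by force
  qed
  obtain T0 where T0: "\<forall>t\<ge>T0. \<forall>x\<in>{-Bd..Bd}. \<bar>R t x\<bar> < 1" using Rlim[of "{-Bd..Bd}" 1] by auto
  define K2 where "K2 = {0..max T0 0} \<times> {-Bd..Bd}"
  have cK2: "compact K2" unfolding K2_def by (intro compact_Times compact_Icc)
  have "compact ((\<lambda>(t,x). R t x) ` K2)"
    by (rule compact_continuous_image[OF continuous_on_subset[OF Rcont] cK2]) (auto simp: K2_def)
  then obtain C2 where C2: "\<forall>z\<in>(\<lambda>(t,x). R t x) ` K2. norm z \<le> C2"
    using compact_imp_bounded bounded_iff by metis
  have Rb: "\<bar>R t x\<bar> \<le> max C2 1" if "t \<ge> 0" "\<bar>x\<bar> \<le> Bd" for t x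
  proof (cases "t \<le> max T0 0")
    case True
    then have "(t, x) \<in> K2" using that by (auto simp: K2_def)
    then have "\<bar>R t x\<bar> \<le> C2" using C2 by force
    then show ?thesis by simp
  next
    case False
    have "t \<ge> T0" using False by simp
    moreover have "x \<in> {-Bd..Bd}" using that(2) by (auto simp: abs_le_iff)
    ultimately have "\<bar>R t x\<bar> < 1" using T0 by blast
    then show ?thesis by simp
  qed
  show ?thesis
  proof (intro exI[of _ "C1 + max C2 1"] allI impI)
    fix t x :: real assume "t \<ge> 0" "\<bar>x\<bar> \<le> Bd"
    then show "\<bar>f t x\<bar> \<le> C1 + max C2 1" using f_eq Pb Rb
      by (smt (verit, best))
  qed
qed

definition Cf where "Cf = (SOME C. \<forall>t\<ge>0. \<forall>x. \<bar>x\<bar> \<le> Bd \<longrightarrow> \<bar>f t x\<bar> \<le> C)"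

lemma Cf: "t \<ge> 0 \<Longrightarrow> \<bar>x\<bar> \<le> Bd \<Longrightarrow> \<bar>f t x\<bar> \<le> Cf"
  using someI_ex[OF fbound_ex] unfolding Cf_def[symmetric] by blast

lemma Cf0: "Cf \<ge> 0" using Cf[of 0 0] Bd(1) by simp

lemma ylip: assumes "s \<ge> 0" "t \<ge> 0" shows "\<bar>ys s - ys t\<bar> \<le> Cf * \<bar>s - t\<bar>"
proof -
  have "norm (ys s - ys t) \<le> Cf * norm (s - t)"
  proof (rule field_differentiable_bound[of "{0..}" ys "\<lambda>z. f z (ys z)" Cf])
    show "convex {0::real..}" by (rule convex_real_interval)
    show "\<And>z. z \<in> {0..} \<Longrightarrow> (ys has_field_derivative f z (ys z)) (at z within {0..})" using yderiv by simp
    show "\<And>z. z \<in> {0..} \<Longrightarrow> norm (f z (ys z)) \<le> Cf" using Cf Bd by simp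
  qed (use assms in auto)
  then show ?thesis by simp
qed

lemma U_int:
  assumes L: "L > 0" and dg: "\<And>s. s \<in> {0..L} \<Longrightarrow> (g has_real_derivative P s (g s)) (at s within {0..L})"
    and s: "s \<in> {0..L}"
  shows "g s = phi P (g 0) s"
proof -
  let ?Q = "\<lambda>t. P (t + L)"
  have Q: "?Q \<in> hull_fun f" using hull_P L by simp
  define w where "w = phi ?Q (g L)"
  have wsol: "fwd_sol ?Q (g L) w" using sol[OF Q] w_def by simp
  define z where "z s = (if s \<le> L then g s else w (s - L))" for s
  have eqz: "w (x - L) = z x" if "x \<in> {L..}" for x
  proof (cases "x = L")
    case True
    then show ?thesis using wsol by (simp add: z_def fwd_sol_def)
  next
    case False
    then show ?thesis using that by (simp add: z_def)
  qed
  have zsol: "fwd_sol P (g 0) z"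
    unfolding fwd_sol_def
  proof (intro conjI allI impI)
    show "z 0 = g 0" using L by (simp add: z_def)
    fix t :: real assume t: "t \<ge> 0"
    have U: "{0..} = {0..L} \<union> {L..}" using L by auto
    have A: "(z has_real_derivative P t (z t)) (at t within {0..L})"
    proof (cases "t \<le> L")
      case True
      have "(g has_real_derivative P t (g t)) (at t within {0..L})" using dg t True by simp
      then have "(z has_real_derivative P t (g t)) (at t within {0..L})"
        by (rule has_field_derivative_transform_within[OF _ zero_less_one]) (use t True in \<open>auto simp: z_def\<close>)
      then show ?thesis using True by (simp add: z_def)
    next
      case False
      have "\<not> t islimpt {0..L}" using False closed_limpt[of "{0..L}"] by (meson atLeastAtMost_iff closed_atLeastAtMost)
      then show ?thesis by (rule deriv_trivial)
    qed
    have B: "(z has_real_derivative P t (z t)) (at t within {L..})"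
    proof (cases "L \<le> t")
      case True
      have tl: "t - L \<ge> 0" using True by simp
      have "\<forall>t\<ge>0. (w has_real_derivative ?Q t (w t)) (at t within {0..})"
        using wsol unfolding fwd_sol_def by blast
      then have w1: "(w has_real_derivative ?Q (t - L) (w (t - L))) (at (t - L) within {0..})"
        using tl by blast
      have w2: "(w has_real_derivative ?Q (t - L) (w (t - L))) (at ((\<lambda>s. s - L) t) within ((\<lambda>s. s - L) ` {L..}))"
        by (rule has_field_derivative_subset[OF w1]) auto
      have "((\<lambda>s. s - L) has_real_derivative 1) (at t within {L..})"
        by (auto intro!: derivative_eq_intros)
      from DERIV_image_chain[OF w2 this]
      have w3: "((\<lambda>s. w (s - L)) has_real_derivative ?Q (t - L) (w (t - L))) (at t within {L..})"
        by (simp add: o_def)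
      have "(z has_real_derivative ?Q (t - L) (w (t - L))) (at t within {L..})"
        by (rule has_field_derivative_transform_within[OF w3 zero_less_one]) (use True eqz in auto)
      moreover have "?Q (t - L) (w (t - L)) = P t (z t)" using eqz[of t] True by simp
      ultimately show ?thesis by simp
    next
      case False
      have "\<not> t islimpt {L..}" using False closed_limpt[of "{L..}"] by (meson atLeast_iff closed_atLeast)
      then show ?thesis by (rule deriv_trivial)
    qed
    show "(z has_real_derivative P t (z t)) (at t within {0..})" using deriv_Un[OF A B] U by simp
  qed
  have "z s = phi P (g 0) s" using Suniq[OF zsol] s by simp
  then show ?thesis using s by (simp add: z_def)
qed

lemma Y0:
  assumes m: "strict_mono m" and lim: "(\<lambda>k. ys (real (m k) * \<tau>)) \<longlonglongrightarrow> v"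
  shows "\<exists>k2. strict_mono (k2 :: nat \<Rightarrow> nat) \<and> (\<forall>e>0. \<exists>N. \<forall>n\<ge>N. \<forall>s\<in>{0..\<tau>}. \<bar>ys (real (m (k2 n)) * \<tau> + s) - phi P v s\<bar> < e)"
proof -
  define X where "X k s = ys (s + real (m k) * \<tau>)" for k s
  have Xnn: "s + real (m k) * \<tau> \<ge> 0" if "s \<in> {0..\<tau>}" for s k using tau that by auto
  have Xb: "\<And>n x. x \<in> {0..\<tau>} \<Longrightarrow> norm (X n x) \<le> Bd" using Bd(2) Xnn by (simp add: X_def)
  have Xeq: "\<exists>d. 0 < d \<and> (\<forall>n y. y \<in> {0..\<tau>} \<and> norm (x - y) < d \<longrightarrow> norm (X n x - X n y) < e)"
    if x: "x \<in> {0..\<tau>}" and e: "0 < e" for x e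
  proof (intro exI[of _ "e / (Cf + 1)"] conjI allI impI)
    show "0 < e / (Cf + 1)" using e Cf0 by simp
    fix n y assume y: "y \<in> {0..\<tau>} \<and> norm (x - y) < e / (Cf + 1)"
    have ym: "y \<in> {0..\<tau>}" using y by simp
    have "\<bar>X n x - X n y\<bar> \<le> Cf * \<bar>x - y\<bar>"
      using ylip[OF Xnn[OF x, of n] Xnn[OF ym, of n]] by (simp add: X_def)
    also have "\<dots> \<le> Cf * (e / (Cf + 1))" using y Cf0 by (intro mult_left_mono) auto
    also have "\<dots> < e" using e Cf0 by (simp add: field_simps)
    finally show "norm (X n x - X n y) < e" by simp
  qed
  have AA: "\<exists>g k2. continuous_on {0..\<tau>} g \<and> strict_mono (k2 :: nat \<Rightarrow> nat) \<and>
     (\<forall>e>0. \<exists>N. \<forall>n x. n \<ge> N \<and> x \<in> {0..\<tau>} \<longrightarrow> norm (X (k2 n) x - g x) < e)"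
  proof (rule Arzela_Ascoli[of "{0..\<tau>}" X Bd])
    show "compact {0..\<tau>}" by simp
    show "\<And>n x. x \<in> {0..\<tau>} \<Longrightarrow> norm (X n x) \<le> Bd" by (rule Xb)
    show "\<And>x e. x \<in> {0..\<tau>} \<Longrightarrow> 0 < e \<Longrightarrow> \<exists>d. 0 < d \<and> (\<forall>n y. y \<in> {0..\<tau>} \<and> norm (x - y) < d \<longrightarrow> norm (X n x - X n y) < e)"
      by (rule Xeq)
    fix g :: "real \<Rightarrow> real" and k :: "nat \<Rightarrow> nat"
    assume a: "continuous_on {0..\<tau>} g" "strict_mono k"
      and c: "\<And>e. 0 < e \<Longrightarrow> \<exists>N. \<forall>n x. n \<ge> N \<and> x \<in> {0..\<tau>} \<longrightarrow> norm (X (k n) x - g x) < e"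
    have c': "\<forall>e>0. \<exists>N. \<forall>n x. n \<ge> N \<and> x \<in> {0..\<tau>} \<longrightarrow> norm (X (k n) x - g x) < e"
    proof (intro allI impI)
      fix e :: real assume "0 < e"
      from c[OF this] show "\<exists>N. \<forall>n x. n \<ge> N \<and> x \<in> {0..\<tau>} \<longrightarrow> norm (X (k n) x - g x) < e" .
    qed
    show ?thesis using a c' by blast
  qed
  then obtain g k2 where gc: "continuous_on {0..\<tau>} g" and k2: "strict_mono (k2 :: nat \<Rightarrow> nat)"
    and unif': "\<forall>e>0. \<exists>N. \<forall>n x. n \<ge> N \<and> x \<in> {0..\<tau>} \<longrightarrow> norm (X (k2 n) x - g x) < e"
    by blast
  have unif: "\<And>e. 0 < e \<Longrightarrow> \<exists>N. \<forall>n x. n \<ge> N \<and> x \<in> {0..\<tau>} \<longrightarrow> norm (X (k2 n) x - g x) < e"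
    using unif' by blast
  have ptw: "(\<lambda>n. X (k2 n) x) \<longlonglongrightarrow> g x" if x: "x \<in> {0..\<tau>}" for x
  proof (rule LIMSEQ_I)
    fix r :: real assume "r > 0"
    from unif[OF this] obtain N where "\<forall>n x. n \<ge> N \<and> x \<in> {0..\<tau>} \<longrightarrow> norm (X (k2 n) x - g x) < r" by blast
    then show "\<exists>no. \<forall>n\<ge>no. norm (X (k2 n) x - g x) < r" using x by blast
  qed
  have gb: "\<bar>g x\<bar> \<le> Bd" if x: "x \<in> {0..\<tau>}" for x
  proof -
    have "(\<lambda>n. \<bar>X (k2 n) x\<bar>) \<longlonglongrightarrow> \<bar>g x\<bar>" by (rule tendsto_rabs[OF ptw[OF x]])
    moreover have "\<exists>N. \<forall>n\<ge>N. \<bar>X (k2 n) x\<bar> \<le> Bd" using Xb x by auto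
    ultimately show ?thesis by (rule LIMSEQ_le_const2)
  qed
  have dX: "(X n has_real_derivative f (x + real (m n) * \<tau>) (X n x)) (at x within {0..\<tau>})"
    if x: "x \<in> {0..\<tau>}" for n x
  proof -
    have a: "real (m n) * \<tau> \<ge> 0" using tau by simp
    have "fwd_sol (\<lambda>t. f (t + real (m n) * \<tau>)) (ys (real (m n) * \<tau>)) (\<lambda>s. ys (s + real (m n) * \<tau>))"
      by (rule fwd_sol_shift[OF ysol a])
    then have "(X n has_real_derivative f (x + real (m n) * \<tau>) (X n x)) (at x within {0..})"
      using x unfolding fwd_sol_def X_def by auto
    then show ?thesis by (rule has_field_derivative_subset) auto
  qed
  have fX: "f (x + real (m n) * \<tau>) (X n x) = P x (X n x) + R (x + real (m n) * \<tau>) (X n x)"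
    if x: "x \<in> {0..\<tau>}" for n x
    using f_eq[OF Xnn[OF x]] Pper_nat by simp
  define K1 where "K1 = {0..\<tau>} \<times> {-Bd..Bd}"
  have ucP: "uniformly_continuous_on K1 (\<lambda>(t,x). P t x)"
    by (rule compact_uniformly_continuous[OF continuous_on_subset[OF Pcont]]) (auto simp: K1_def intro!: compact_Times)
  have mk2: "strict_mono (m \<circ> k2)" by (rule strict_mono_o[OF m k2])
  have nle: "\<forall>\<^sub>F n in sequentially. \<forall>x\<in>{0..\<tau>}. \<forall>h. norm ((*) (f (x + real (m (k2 n)) * \<tau>) (X (k2 n) x)) h - (*) (P x (g x)) h) \<le> e * norm h"
    if e: "e > 0" for e
  proof -
    obtain d where d: "d > 0" "\<forall>z\<in>K1. \<forall>z'\<in>K1. dist z' z < d \<longrightarrow> dist ((\<lambda>(t,x). P t x) z') ((\<lambda>(t,x). P t x) z) < e/2"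
      using ucP e unfolding uniformly_continuous_on_def by (meson half_gt_zero)
    obtain N1 where N1: "\<forall>n x. n \<ge> N1 \<and> x \<in> {0..\<tau>} \<longrightarrow> norm (X (k2 n) x - g x) < d" using unif d(1) by blast
    obtain T0 where T0: "\<forall>t\<ge>T0. \<forall>x\<in>{-Bd..Bd}. \<bar>R t x\<bar> < e/2" using Rlim[of "{-Bd..Bd}" "e/2"] e by auto
    obtain N2 :: nat where N2: "T0/\<tau> \<le> real N2" using real_arch_simple by blast
    then have N2': "T0 \<le> real N2 * \<tau>" using tau by (simp add: pos_divide_le_eq)
    show ?thesis
      unfolding eventually_sequentially
    proof (intro exI[of _ "max N1 N2"] allI impI ballI)
      fix n x h assume n: "max N1 N2 \<le> n" and x: "x \<in> {0..\<tau>}"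
      have "n \<le> (m \<circ> k2) n" by (rule seq_suble[OF mk2])
      then have mk: "real N2 \<le> real (m (k2 n))" using n by simp
      have Xx: "(x, X (k2 n) x) \<in> K1" using Xb[OF x, of "k2 n"] x by (auto simp: K1_def abs_le_iff)
      have gx: "(x, g x) \<in> K1" using gb[OF x] x by (auto simp: K1_def abs_le_iff)
      have "norm (X (k2 n) x - g x) < d" using N1 n x by auto
      then have "dist (x, X (k2 n) x) (x, g x) < d" by (simp add: dist_Pair_Pair dist_real_def)
      then have P1: "\<bar>P x (X (k2 n) x) - P x (g x)\<bar> < e/2" using d(2) Xx gx by (force simp: dist_real_def)
      have "real N2 * \<tau> \<le> real (m (k2 n)) * \<tau>" using mult_right_mono[OF mk, of \<tau>] tau by simp
      then have "T0 \<le> x + real (m (k2 n)) * \<tau>" using N2' x by auto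
      moreover have "X (k2 n) x \<in> {-Bd..Bd}" using Xb[OF x, of "k2 n"] by (auto simp: abs_le_iff)
      ultimately have P2: "\<bar>R (x + real (m (k2 n)) * \<tau>) (X (k2 n) x)\<bar> < e/2" using T0 by blast
      let ?a = "P x (X (k2 n) x) - P x (g x)" and ?b = "R (x + real (m (k2 n)) * \<tau>) (X (k2 n) x)"
      have "\<bar>f (x + real (m (k2 n)) * \<tau>) (X (k2 n) x) - P x (g x)\<bar> = \<bar>?a + ?b\<bar>"
        using fX[OF x, of "k2 n"] by (simp add: algebra_simps)
      also have "\<dots> \<le> \<bar>?a\<bar> + \<bar>?b\<bar>" by (rule abs_triangle_ineq)
      also have "\<dots> \<le> e" using P1 P2 by simp
      finally have le: "\<bar>f (x + real (m (k2 n)) * \<tau>) (X (k2 n) x) - P x (g x)\<bar> \<le> e" .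
      have "norm (f (x + real (m (k2 n)) * \<tau>) (X (k2 n) x) * h - P x (g x) * h)
          = \<bar>f (x + real (m (k2 n)) * \<tau>) (X (k2 n) x) - P x (g x)\<bar> * \<bar>h\<bar>"
        by (metis abs_mult left_diff_distrib real_norm_def)
      also have "\<dots> \<le> e * \<bar>h\<bar>" by (rule mult_right_mono[OF le]) simp
      finally show "norm ((*) (f (x + real (m (k2 n)) * \<tau>) (X (k2 n) x)) h - (*) (P x (g x)) h) \<le> e * norm h"
        by simp
    qed
  qed
  have lim0: "(\<lambda>n. X (k2 n) 0) \<longlonglongrightarrow> v"
    using LIMSEQ_subseq_LIMSEQ[OF lim k2] by (simp add: X_def o_def)
  have dX2: "(X (k2 n) has_derivative (*) (f (x + real (m (k2 n)) * \<tau>) (X (k2 n) x))) (at x within {0..\<tau>})"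
    if "x \<in> {0..\<tau>}" for n x
    using dX[OF that, of "k2 n"] unfolding has_field_derivative_def .
  have cvx: "convex {0..\<tau>}" by (rule convex_real_interval)
  have z0: "(0::real) \<in> {0..\<tau>}" using tau by simp
  have HDS: "\<exists>g2. \<forall>x\<in>{0..\<tau>}. (\<lambda>n. X (k2 n) x) \<longlonglongrightarrow> g2 x \<and> (g2 has_derivative (*) (P x (g x))) (at x within {0..\<tau>})"
    by (rule has_derivative_sequence[of "{0..\<tau>}" "\<lambda>n. X (k2 n)" "\<lambda>n x. (*) (f (x + real (m (k2 n)) * \<tau>) (X (k2 n) x))"
        "\<lambda>x. (*) (P x (g x))" 0 v, OF cvx dX2 nle z0 lim0])
  then obtain g2 where g2: "\<forall>x\<in>{0..\<tau>}. (\<lambda>n. X (k2 n) x) \<longlonglongrightarrow> g2 x \<and> (g2 has_derivative (*) (P x (g x))) (at x within {0..\<tau>})"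
    by blast
  have gg: "g2 x = g x" if "x \<in> {0..\<tau>}" for x
  proof -
    have "(\<lambda>n. X (k2 n) x) \<longlonglongrightarrow> g2 x" using g2 that by blast
    from LIMSEQ_unique[OF this ptw[OF that]] show ?thesis .
  qed
  have dg2: "(g2 has_real_derivative P s (g2 s)) (at s within {0..\<tau>})" if "s \<in> {0..\<tau>}" for s
  proof -
    have "(g2 has_derivative (*) (P s (g s))) (at s within {0..\<tau>})" using g2 that by blast
    then show ?thesis unfolding has_field_derivative_def using gg[OF that] by simp
  qed
  have g20: "g2 0 = v"
  proof -
    have "(\<lambda>n. X (k2 n) 0) \<longlonglongrightarrow> g2 0" using g2 z0 by blast
    from LIMSEQ_unique[OF this lim0] show ?thesis .
  qed
  have gphi: "g x = phi P v x" if "x \<in> {0..\<tau>}" for x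
    using U_int[OF tau dg2 that] gg[OF that] g20 by simp
  show ?thesis
  proof (intro exI[of _ k2] conjI k2 allI impI)
    fix e :: real assume "e > 0"
    from unif[OF this] obtain N where N: "\<forall>n x. n \<ge> N \<and> x \<in> {0..\<tau>} \<longrightarrow> norm (X (k2 n) x - g x) < e" by blast
    show "\<exists>N. \<forall>n\<ge>N. \<forall>s\<in>{0..\<tau>}. \<bar>ys (real (m (k2 n)) * \<tau> + s) - phi P v s\<bar> < e"
      using N gphi by (intro exI[of _ N]) (auto simp: X_def add.commute)
  qed
qed

lemma Y:
  assumes m: "strict_mono m" and lim: "(\<lambda>k. ys (real (m k) * \<tau>)) \<longlonglongrightarrow> v" and e: "e > 0"
  shows "\<exists>N. \<forall>n\<ge>N. \<forall>s\<in>{0..\<tau>}. \<bar>ys (real (m n) * \<tau> + s) - phi P v s\<bar> < e"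
proof (rule ccontr)
  assume "\<not> ?thesis"
  then have "\<forall>N. \<exists>n\<ge>N. n \<in> {n. \<exists>s\<in>{0..\<tau>}. \<bar>ys (real (m n) * \<tau> + s) - phi P v s\<bar> \<ge> e}" by (auto simp: not_less)
  then have "infinite {n. \<exists>s\<in>{0..\<tau>}. \<bar>ys (real (m n) * \<tau> + s) - phi P v s\<bar> \<ge> e}"
    using infinite_nat_iff_unbounded_le by blast
  then obtain r :: "nat \<Rightarrow> nat" where r: "strict_mono r" "\<And>n. \<exists>s\<in>{0..\<tau>}. \<bar>ys (real (m (r n)) * \<tau> + s) - phi P v s\<bar> \<ge> e"
    using infinite_enumerate by blast
  have mr: "strict_mono (m \<circ> r)" by (rule strict_mono_o[OF m r(1)])
  have lr: "(\<lambda>k. ys (real ((m \<circ> r) k) * \<tau>)) \<longlonglongrightarrow> v"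
    using LIMSEQ_subseq_LIMSEQ[OF lim r(1)] by (simp add: o_def)
  obtain k2 :: "nat \<Rightarrow> nat" where k2: "strict_mono k2" "\<forall>e>0. \<exists>N. \<forall>n\<ge>N. \<forall>s\<in>{0..\<tau>}. \<bar>ys (real ((m \<circ> r) (k2 n)) * \<tau> + s) - phi P v s\<bar> < e"
    using Y0[OF mr lr] by blast
  obtain N where N: "\<forall>n\<ge>N. \<forall>s\<in>{0..\<tau>}. \<bar>ys (real ((m \<circ> r) (k2 n)) * \<tau> + s) - phi P v s\<bar> < e"
    using k2(2) e by blast
  obtain s where "s \<in> {0..\<tau>}" "\<bar>ys (real (m (r (k2 N))) * \<tau> + s) - phi P v s\<bar> \<ge> e" using r(2) by blast
  then show False using N by force
qed

lemma Ylim: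
  assumes m: "strict_mono m" and lim: "(\<lambda>k. ys (real (m k) * \<tau>)) \<longlonglongrightarrow> v"
  shows "(\<lambda>n. ys (real (m n) * \<tau> + \<tau>)) \<longlonglongrightarrow> Tm v"
proof (rule LIMSEQ_I)
  fix r :: real assume "r > 0"
  from Y[OF m lim this] obtain N where N: "\<forall>n\<ge>N. \<forall>s\<in>{0..\<tau>}. \<bar>ys (real (m n) * \<tau> + s) - phi P v s\<bar> < r" by blast
  have tt: "\<tau> \<in> {0..\<tau>}" using tau by simp
  show "\<exists>no. \<forall>n\<ge>no. norm (ys (real (m n) * \<tau> + \<tau>) - Tm v) < r"
  proof (intro exI[of _ N] allI impI)
    fix n assume "n \<ge> N"
    then show "norm (ys (real (m n) * \<tau> + \<tau>) - Tm v) < r" using N[rule_format, OF \<open>n \<ge> N\<close> tt] by simp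
  qed
qed

lemma ys_in: "t \<ge> 0 \<Longrightarrow> ys t \<in> cball 0 Bd" using Bd(2) by (simp add: dist_real_def)

lemma up:
  assumes c: "Tm c > c"
  shows "\<exists>N. \<forall>n\<ge>N. ys (real n * \<tau>) \<ge> c \<longrightarrow> ys (real (Suc n) * \<tau>) > c"
proof (rule ccontr)
  assume "\<not> ?thesis"
  then have "\<forall>N. \<exists>n\<ge>N. n \<in> {n. ys (real n * \<tau>) \<ge> c \<and> ys (real (Suc n) * \<tau>) \<le> c}" by (auto simp: not_less)
  then have "infinite {n. ys (real n * \<tau>) \<ge> c \<and> ys (real (Suc n) * \<tau>) \<le> c}"
    using infinite_nat_iff_unbounded_le by blast
  then obtain r :: "nat \<Rightarrow> nat" where r: "strict_mono r" "\<And>n. ys (real (r n) * \<tau>) \<ge> c \<and> ys (real (Suc (r n)) * \<tau>) \<le> c"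
    using infinite_enumerate by blast
  have "\<forall>n. ys (real (r n) * \<tau>) \<in> cball 0 Bd" using ys_in tau by simp
  then obtain l r2 where r2: "strict_mono (r2 :: nat \<Rightarrow> nat)" "((\<lambda>n. ys (real (r n) * \<tau>)) \<circ> r2) \<longlonglongrightarrow> l"
    using seq_compactE[OF compact_imp_seq_compact[OF compact_cball]] by metis
  define m where "m = r \<circ> r2"
  have m: "strict_mono m" unfolding m_def by (rule strict_mono_o[OF r(1) r2(1)])
  have lim: "(\<lambda>k. ys (real (m k) * \<tau>)) \<longlonglongrightarrow> l" using r2(2) by (simp add: m_def o_def)
  have "c \<le> l" by (rule LIMSEQ_le_const[OF lim]) (use r(2) m_def in auto)
  have l2: "(\<lambda>n. ys (real (m n) * \<tau> + \<tau>)) \<longlonglongrightarrow> Tm l" by (rule Ylim[OF m lim])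
  have "ys (real (m n) * \<tau> + \<tau>) \<le> c" for n
    using r(2)[of "r2 n"] by (simp add: m_def algebra_simps)
  then have "Tm l \<le> c" by (intro LIMSEQ_le_const2[OF l2]) auto
  moreover have "Tm c \<le> Tm l" by (rule T_mono[OF \<open>c \<le> l\<close>])
  ultimately show False using c by simp
qed

lemma down:
  assumes c: "Tm c < c"
  shows "\<exists>N. \<forall>n\<ge>N. ys (real n * \<tau>) \<le> c \<longrightarrow> ys (real (Suc n) * \<tau>) < c"
proof (rule ccontr)
  assume "\<not> ?thesis"
  then have "\<forall>N. \<exists>n\<ge>N. n \<in> {n. ys (real n * \<tau>) \<le> c \<and> ys (real (Suc n) * \<tau>) \<ge> c}" by (auto simp: not_less)
  then have "infinite {n. ys (real n * \<tau>) \<le> c \<and> ys (real (Suc n) * \<tau>) \<ge> c}"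
    using infinite_nat_iff_unbounded_le by blast
  then obtain r :: "nat \<Rightarrow> nat" where r: "strict_mono r" "\<And>n. ys (real (r n) * \<tau>) \<le> c \<and> ys (real (Suc (r n)) * \<tau>) \<ge> c"
    using infinite_enumerate by blast
  have "\<forall>n. ys (real (r n) * \<tau>) \<in> cball 0 Bd" using ys_in tau by simp
  then obtain l r2 where r2: "strict_mono (r2 :: nat \<Rightarrow> nat)" "((\<lambda>n. ys (real (r n) * \<tau>)) \<circ> r2) \<longlonglongrightarrow> l"
    using seq_compactE[OF compact_imp_seq_compact[OF compact_cball]] by metis
  define m where "m = r \<circ> r2"
  have m: "strict_mono m" unfolding m_def by (rule strict_mono_o[OF r(1) r2(1)])
  have lim: "(\<lambda>k. ys (real (m k) * \<tau>)) \<longlonglongrightarrow> l" using r2(2) by (simp add: m_def o_def)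
  have "l \<le> c" by (rule LIMSEQ_le_const2[OF lim]) (use r(2) m_def in auto)
  have l2: "(\<lambda>n. ys (real (m n) * \<tau> + \<tau>)) \<longlonglongrightarrow> Tm l" by (rule Ylim[OF m lim])
  have "ys (real (m n) * \<tau> + \<tau>) \<ge> c" for n
    using r(2)[of "r2 n"] by (simp add: m_def algebra_simps)
  then have "c \<le> Tm l" by (intro LIMSEQ_le_const[OF l2]) auto
  moreover have "Tm l \<le> Tm c" by (rule T_mono[OF \<open>l \<le> c\<close>])
  ultimately show False using c by simp
qed

lemma evsep:
  assumes "Tm c \<noteq> c"
  shows "eventually (\<lambda>n. ys (real n * \<tau>) > c) sequentially \<or> eventually (\<lambda>n. ys (real n * \<tau>) < c) sequentially"
proof (cases "Tm c > c")
  case True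
  obtain N where N: "\<forall>n\<ge>N. ys (real n * \<tau>) \<ge> c \<longrightarrow> ys (real (Suc n) * \<tau>) > c" using up[OF True] by blast
  show ?thesis
  proof (cases "\<exists>n\<ge>N. ys (real n * \<tau>) \<ge> c")
    case True
    then obtain n where n: "n \<ge> N" "ys (real n * \<tau>) \<ge> c" by blast
    have all: "ys (real (n + k) * \<tau>) \<ge> c" for k
    proof (induction k)
      case (Suc k)
      have "N \<le> n + k" using n(1) by simp
      then have "ys (real (Suc (n + k)) * \<tau>) > c" using N Suc.IH by blast
      then show ?case by simp
    qed (use n in simp)
    have "\<forall>j\<ge>Suc n. ys (real j * \<tau>) > c"
    proof (intro allI impI)
      fix j assume j: "j \<ge> Suc n"
      define k where "k = j - Suc n"
      have k: "j = Suc (n + k)" using j by (simp add: k_def)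
      have "N \<le> n + k" using n(1) by simp
      then have "ys (real (Suc (n + k)) * \<tau>) > c" using N all[of k] by blast
      then show "ys (real j * \<tau>) > c" using k by simp
    qed
    then show ?thesis unfolding eventually_sequentially by blast
  next
    case False
    then have "\<forall>n\<ge>N. ys (real n * \<tau>) < c" by auto
    then show ?thesis unfolding eventually_sequentially by blast
  qed
next
  case False
  then have lt: "Tm c < c" using assms by simp
  obtain N where N: "\<forall>n\<ge>N. ys (real n * \<tau>) \<le> c \<longrightarrow> ys (real (Suc n) * \<tau>) < c" using down[OF lt] by blast
  show ?thesis
  proof (cases "\<exists>n\<ge>N. ys (real n * \<tau>) \<le> c")
    case True
    then obtain n where n: "n \<ge> N" "ys (real n * \<tau>) \<le> c" by blast
    have all: "ys (real (n + k) * \<tau>) \<le> c" for k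
    proof (induction k)
      case (Suc k)
      have "N \<le> n + k" using n(1) by simp
      then have "ys (real (Suc (n + k)) * \<tau>) < c" using N Suc.IH by blast
      then show ?case by simp
    qed (use n in simp)
    have "\<forall>j\<ge>Suc n. ys (real j * \<tau>) < c"
    proof (intro allI impI)
      fix j assume j: "j \<ge> Suc n"
      define k where "k = j - Suc n"
      have k: "j = Suc (n + k)" using j by (simp add: k_def)
      have "N \<le> n + k" using n(1) by simp
      then have "ys (real (Suc (n + k)) * \<tau>) < c" using N all[of k] by blast
      then show "ys (real j * \<tau>) < c" using k by simp
    qed
    then show ?thesis unfolding eventually_sequentially by blast
  next
    case False
    then have "\<forall>n\<ge>N. ys (real n * \<tau>) > c" by auto
    then show ?thesis unfolding eventually_sequentially by blast
  qed
qed

lemma conv: "\<exists>v. (\<lambda>n. ys (real n * \<tau>)) \<longlonglongrightarrow> v \<and> Tm v = v"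
proof -
  define A where "A = {c. eventually (\<lambda>n. ys (real n * \<tau>) > c) sequentially}"
  define Bs where "Bs = {c. eventually (\<lambda>n. ys (real n * \<tau>) < c) sequentially}"
  have yb: "\<bar>ys (real n * \<tau>)\<bar> \<le> Bd" for n using Bd(2) tau by simp
  have lo: "-Bd - 1 < ys (real n * \<tau>)" for n using yb[of n] by (simp add: abs_le_iff)
  have hi: "ys (real n * \<tau>) < Bd + 1" for n using yb[of n] by (simp add: abs_le_iff)
  have a0: "-Bd - 1 \<in> A" unfolding A_def using lo by (simp add: always_eventually)
  have b0: "Bd + 1 \<in> Bs" unfolding Bs_def using hi by (simp add: always_eventually)
  have sep: "c < d" if "c \<in> A" "d \<in> Bs" for c d
  proof -
    have "eventually (\<lambda>n. ys (real n * \<tau>) > c \<and> ys (real n * \<tau>) < d) sequentially"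
      using that eventually_conj unfolding A_def Bs_def by blast
    then obtain N where "\<forall>n\<ge>N. ys (real n * \<tau>) > c \<and> ys (real n * \<tau>) < d"
      unfolding eventually_sequentially by blast
    then show ?thesis by force
  qed
  have Ane: "A \<noteq> {}" using a0 by blast
  have Bne: "Bs \<noteq> {}" using b0 by blast
  have bddA: "bdd_above A" using sep b0 by (intro bdd_aboveI[of _ "Bd + 1"]) (meson less_imp_le)
  have bddB: "bdd_below Bs" using sep a0 by (intro bdd_belowI[of _ "-Bd - 1"]) (meson less_imp_le)
  define a where "a = Sup A"
  define b where "b = Inf Bs"
  have ab: "a \<le> b" unfolding a_def b_def
  proof (rule cInf_greatest[OF Bne])
    fix d assume "d \<in> Bs"
    then show "Sup A \<le> d" using sep by (intro cSup_least[OF Ane]) (meson less_imp_le)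
  qed
  show ?thesis
  proof (cases "a < b")
    case True
    have fixs: "Tm c = c" if c: "a < c" "c < b" for c
    proof (rule ccontr)
      assume "Tm c \<noteq> c"
      from evsep[OF this] have "c \<in> A \<or> c \<in> Bs" by (auto simp: A_def Bs_def)
      then show False
      proof
        assume "c \<in> A"
        then have "c \<le> a" unfolding a_def by (rule cSup_upper[OF _ bddA])
        then show False using c by simp
      next
        assume "c \<in> Bs"
        then have "b \<le> c" unfolding b_def by (rule cInf_lower[OF _ bddB])
        then show False using c by simp
      qed
    qed
    define c0 where "c0 = (a + b) / 2"
    have f0: "Tm c0 = c0" using True fixs c0_def by simp
    have near: "\<exists>c'. c' \<noteq> c0 \<and> \<bar>c' - c0\<bar> < e \<and> Tm c' = c'" if e: "e > 0" for e
    proof -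
      define mm where "mm = min (e/2) ((b - a)/4)"
      have pos: "mm > 0" using e True unfolding mm_def by (simp add: min_def)
      have le1: "mm \<le> e/2" unfolding mm_def by (rule min.cobounded1)
      have le2: "mm \<le> (b - a)/4" unfolding mm_def by (rule min.cobounded2)
      have "c0 + mm \<noteq> c0" using pos by linarith
      moreover have "\<bar>c0 + mm - c0\<bar> < e" using pos le1 e by simp
      moreover have "Tm (c0 + mm) = c0 + mm"
        by (rule fixs) (use pos le2 c0_def True in auto)
      ultimately show ?thesis by blast
    qed
    have False by (rule fixed_isolated[OF f0 near])
    then show ?thesis ..
  next
    case False
    then have ab_eq: "a = b" using ab by simp
    have lim: "(\<lambda>n. ys (real n * \<tau>)) \<longlonglongrightarrow> a"
    proof (rule order_tendstoI)
      fix a' assume "a' < a"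
      then obtain c where c: "c \<in> A" "a' < c" using less_cSup_iff[OF Ane bddA] a_def by blast
      from c(1) have "eventually (\<lambda>n. ys (real n * \<tau>) > c) sequentially" by (simp add: A_def)
      then show "eventually (\<lambda>n. a' < ys (real n * \<tau>)) sequentially"
        by (rule eventually_mono) (use c(2) in auto)
    next
      fix a' assume "a < a'"
      then have "b < a'" using ab_eq by simp
      then obtain d where d: "d \<in> Bs" "d < a'" using cInf_less_iff[OF Bne bddB] b_def by blast
      from d(1) have "eventually (\<lambda>n. ys (real n * \<tau>) < d) sequentially" by (simp add: Bs_def)
      then show "eventually (\<lambda>n. ys (real n * \<tau>) < a') sequentially"
        by (rule eventually_mono) (use d(2) in auto)
    qed
    have lim': "(\<lambda>k. ys (real (id k) * \<tau>)) \<longlonglongrightarrow> a" using lim by simp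
    have l1: "(\<lambda>n. ys (real (id n) * \<tau> + \<tau>)) \<longlonglongrightarrow> Tm a" by (rule Ylim[OF strict_mono_id lim'])
    have eqf: "(\<lambda>n. ys (real (Suc n) * \<tau>)) = (\<lambda>n. ys (real (id n) * \<tau> + \<tau>))"
      by (rule ext) (simp add: algebra_simps)
    have l2: "(\<lambda>n. ys (real (id n) * \<tau> + \<tau>)) \<longlonglongrightarrow> a"
      using LIMSEQ_Suc[OF lim] eqf by simp
    have "Tm a = a" using LIMSEQ_unique[OF l1 l2] .
    then show ?thesis using lim by blast
  qed
qed

end

theorem mainTheorem16:
  fixes \<tau> :: real and f P R :: "real \<Rightarrow> real \<Rightarrow> real" and u0 :: real
  assumes "\<tau> > 0"
    and "continuous_on ({0..} \<times> UNIV) (\<lambda>(t,x). f t x)"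
    and "regular f"
    and "asymp_periodic_decomp \<tau> f P R"
    and "\<And>p. periodic_sol \<tau> P p \<Longrightarrow> pos_asymp_stable P p \<or> neg_asymp_stable P p"
    and "bounded (phi f u0 ` {0..})"
  shows "asymp_periodic_fun \<tau> (phi f u0)"
proof -
  interpret S: setting \<tau> f P R u0
    by (rule setting.intro) (use assms in auto)
  obtain v where lim: "(\<lambda>n. phi f u0 (real n * \<tau>)) \<longlonglongrightarrow> v" and fx: "S.Tm v = v"
    using S.conv by blast
  let ?q = "S.pp v"
  show ?thesis
    unfolding asymp_periodic_fun_def
  proof (intro exI[of _ ?q] conjI allI)
    show "continuous_on UNIV ?q"
      by (rule continuous_at_imp_continuous_on) (use S.pp_deriv[OF fx] DERIV_isCont in blast)
    show "\<And>t. ?q (t + \<tau>) = ?q t" by (rule S.pp_per)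
    show "((\<lambda>t. phi f u0 t - ?q t) \<longlongrightarrow> 0) at_top"
      unfolding tendsto_iff
    proof (intro allI impI)
      fix e :: real assume e: "e > 0"
      have lim': "(\<lambda>k. phi f u0 (real (id k) * \<tau>)) \<longlonglongrightarrow> v" using lim by simp
      obtain N where N: "\<forall>n\<ge>N. \<forall>s\<in>{0..\<tau>}. \<bar>phi f u0 (real (id n) * \<tau> + s) - phi P v s\<bar> < e"
        using S.Y[OF strict_mono_id lim' e] by blast
      show "eventually (\<lambda>t. dist (phi f u0 t - ?q t) 0 < e) at_top"
        unfolding eventually_at_top_linorder
      proof (intro exI[of _ "real N * \<tau>"] allI impI)
        fix t assume t: "t \<ge> real N * \<tau>"
        define k where "k = \<lfloor>t/\<tau>\<rfloor>"
        have "real N \<le> t / \<tau>" using t assms(1) by (simp add: pos_le_divide_eq)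
        then have kN: "int N \<le> k" unfolding k_def by (simp add: le_floor_iff)
        define s where "s = t - \<tau> * of_int k"
        have s: "0 \<le> s" "s < \<tau>" using frac_bounds[OF assms(1), of t] s_def k_def by auto
        have rk: "real (nat k) = of_int k" using kN by simp
        have teq: "t = real (id (nat k)) * \<tau> + s" using rk s_def by (simp add: algebra_simps)
        have nk: "nat k \<ge> N" using kN by simp
        have "\<bar>phi f u0 (real (id (nat k)) * \<tau> + s) - phi P v s\<bar> < e" using N nk s by auto
        moreover have "?q t = phi P v s" unfolding S.pp_def s_def k_def by simp
        ultimately show "dist (phi f u0 t - ?q t) 0 < e" using teq by (simp add: dist_real_def)
      qed
    qed
  qed
qed

end
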